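(* For any non-null loop $l$ in $\mathbb{Z}^d$, $\mathrm{area}(l)$ is at most the minimum number of deformation steps in a vanishing trajectory starting from $l$; that is, every vanishing trajectory starting at $l$ contains at least $\mathrm{area}(l)$ deformation steps.
   Context: Lattice, paths and loops. $E$ is the set of directed nearest-neighbour edges of $\mathbb{Z}^d$ ($d\ge2$); $e$ goes from $u(e)$ to $v(e)$, $e^{-1}$ is the reversed edge; $e$ is positively oriented if $v(e)$ is lexicographically larger than $u(e)$, and $E^+$ is the set of such edges. Paths, closed paths (the null path included), cycles (classes of closed paths under cyclic rotation); each cycle has a first edge fixed by an arbitrary rule and "location $k$" is its $k$-th edge. A closed path $e_1\cdots e_n$ has a backtrack at $i\le n-1$ if $e_{i+1}=e_i^{-1}$ and at $n$ if $e_1=e_n^{-1}$; successively erasing backtracks (removing both edges) until none remain gives a well-defined cycle $[\cdot]$. A loop is a cycle without backtracks (including the null loop). A plaquette is a nonbacktracking closed path of length 4; $\mathcal{P}^+$ is the set of plaquettes $e_1e_2e_3e_4$ with $u(e_1)$ lexicographically smallest and $v(e_1)$ second smallest among its vertices. Loop sequences: finite sequences of loops modulo inserting/deleting null loops, with minimal representations without null loops. Operations and trajectories. For non-null loops $l,l'$ and locations $x,y$: same edge $e$: $l=aeb$, $l'=ced$, $l\oplus_{x,y}l'=[aedceb]$, $l\ominus_{x,y}l'=[ac^{-1}d^{-1}b]$; $e$ vs $e^{-1}$: $l=aeb$, $l'=ce^{-1}d$, $l\oplus_{x,y}l'=[aec^{-1}d^{-1}eb]$, $l\ominus_{x,y}l'=[adcb]$.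 Deformations of $l$: $l\oplus_{x,y}p$, $l\ominus_{x,y}p$ for plaquettes $p$ containing the edge at location $x$ of $l$ or its inverse. Splittings at distinct locations $x,y$: $l=aebec$ (displayed $e$'s at $x,y$ respectively) gives $([aec],[be])$; $l=aebe^{-1}c$ gives $([ac],[b])$. A deformation (splitting) of a loop sequence replaces one component by a deformation (by the two loops of a splitting) of it. A trajectory is a sequence of loop sequences each obtained from the previous by a deformation or a splitting; a vanishing trajectory is finite and ends at the null loop sequence. Area. $1$-chains are elements of the free $\mathbb{Z}$-module over $E^+$, lattice surfaces elements of the free $\mathbb{Z}$-module over $\mathcal{P}^+$. Each $p\in\mathcal{P}^+$ is uniquely $e_1e_2e_3^{-1}e_4^{-1}$ with $e_i\in E^+$, and $\delta(p)=e_1+e_2-e_3-e_4$ extended linearly. For $e\in E$, $r(e)=e$ if $e\in E^+$ and $r(e)=-e^{-1}$ otherwise; $r(l)=\sum_i r(e_i)$ for $l=e_1\cdots e_n$. $\mathrm{area}(\sum n_pp)=\sum|n_p|$ and $\mathrm{area}(l)$ is the minimal area of a lattice surface $x$ with $\delta(x)=r(l)$. *)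

theory Defs
  imports Main
begin

type_synonym vert = "int list"
type_synonym edge = "vert \<times> vert"

definition lattice_edge :: "nat \<Rightarrow> edge \<Rightarrow> bool" where
  "lattice_edge d e \<longleftrightarrow> length (fst e) = d \<and>
     (\<exists>i<d. snd e = (fst e)[i := fst e ! i + 1] \<or> snd e = (fst e)[i := fst e ! i - 1])"

definition einv :: "edge \<Rightarrow> edge" where
  "einv e = (snd e, fst e)"

definition lex_less :: "vert \<Rightarrow> vert \<Rightarrow> bool" where
  "lex_less u v \<longleftrightarrow> (u, v) \<in> lexord {(a, b). a < (b::int)}"

definition positive_edge :: "nat \<Rightarrow> edge \<Rightarrow> bool" where
  "positive_edge d e \<longleftrightarrow> lattice_edge d e \<and> lex_less (fst e) (snd e)"

definition is_path :: "nat \<Rightarrow> edge list \<Rightarrow> bool" where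
  "is_path d w \<longleftrightarrow> (\<forall>e\<in>set w. lattice_edge d e) \<and>
     (\<forall>i. Suc i < length w \<longrightarrow> snd (w ! i) = fst (w ! Suc i))"

definition closed_path :: "nat \<Rightarrow> edge list \<Rightarrow> bool" where
  "closed_path d w \<longleftrightarrow> is_path d w \<and> (w \<noteq> [] \<longrightarrow> snd (last w) = fst (hd w))"

definition pinv :: "edge list \<Rightarrow> edge list" where
  "pinv c = rev (map einv c)"

text \<open>Cycles: closed paths modulo cyclic rotation.\<close>
definition rot_eq :: "'a list \<Rightarrow> 'a list \<Rightarrow> bool" where
  "rot_eq a b \<longleftrightarrow> (\<exists>n. b = rotate n a)"

text \<open>Erasing one backtrack of a closed path, at a position i < n or at position n.\<close>
inductive erase1 :: "edge list \<Rightarrow> edge list \<Rightarrow> bool" where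
  inner: "erase1 (xs @ [e, einv e] @ ys) (xs @ ys)"
| wrap: "erase1 ([e] @ ys @ [einv e]) ys"

definition no_backtrack :: "edge list \<Rightarrow> bool" where
  "no_backtrack w \<longleftrightarrow> \<not> (\<exists>w'. erase1 w w')"

text \<open>l is (a representative of) the cycle [w] obtained by successively erasing backtracks.\<close>
definition reduces :: "edge list \<Rightarrow> edge list \<Rightarrow> bool" where
  "reduces w l \<longleftrightarrow> (\<exists>l'. erase1\<^sup>*\<^sup>* w l' \<and> no_backtrack l' \<and> rot_eq l' l)"

definition is_loop :: "nat \<Rightarrow> edge list \<Rightarrow> bool" where
  "is_loop d l \<longleftrightarrow> closed_path d l \<and> no_backtrack l"

definition plaquette :: "nat \<Rightarrow> edge list \<Rightarrow> bool" where
  "plaquette d p \<longleftrightarrow> closed_path d p \<and> length p = 4 \<and> no_backtrack p"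

definition deform :: "nat \<Rightarrow> edge list \<Rightarrow> edge list \<Rightarrow> bool" where
  "deform d l l' \<longleftrightarrow> is_loop d l \<and> l \<noteq> [] \<and>
    (\<exists>a e b c f p. l = a @ [e] @ b \<and> plaquette d p \<and>
      ((p = c @ [e] @ f \<and>
          (reduces (a @ [e] @ f @ c @ [e] @ b) l' \<or> reduces (a @ pinv c @ pinv f @ b) l')) \<or>
       (p = c @ [einv e] @ f \<and>
          (reduces (a @ [e] @ pinv c @ pinv f @ [e] @ b) l' \<or> reduces (a @ f @ c @ b) l'))))"

definition split_loop :: "nat \<Rightarrow> edge list \<Rightarrow> edge list \<Rightarrow> edge list \<Rightarrow> bool" where
  "split_loop d l l1 l2 \<longleftrightarrow> is_loop d l \<and> l \<noteq> [] \<and>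
    (\<exists>a e b c.
       (l = a @ [e] @ b @ [e] @ c \<and> reduces (a @ [e] @ c) l1 \<and> reduces (b @ [e]) l2) \<or>
       (l = a @ [e] @ b @ [einv e] @ c \<and> reduces (a @ c) l1 \<and> reduces b l2))"

text \<open>Loop sequences modulo null loops and rotation of each component.\<close>
definition seq_eq :: "edge list list \<Rightarrow> edge list list \<Rightarrow> bool" where
  "seq_eq s t \<longleftrightarrow> list_all2 rot_eq (filter (\<lambda>x. x \<noteq> []) s) (filter (\<lambda>x. x \<noteq> []) t)"

definition traj_step :: "nat \<Rightarrow> bool \<Rightarrow> edge list list \<Rightarrow> edge list list \<Rightarrow> bool" where
  "traj_step d k s s' \<longleftrightarrow> (\<exists>A l B C. seq_eq s (A @ [l] @ B) \<and> seq_eq s' (A @ C @ B) \<and>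
     (if k then (\<exists>l'. C = [l'] \<and> deform d l l')
           else (\<exists>l1 l2. C = [l1, l2] \<and> split_loop d l l1 l2)))"

definition vanishing_traj :: "nat \<Rightarrow> edge list list list \<Rightarrow> bool list \<Rightarrow> bool" where
  "vanishing_traj d s ks \<longleftrightarrow> s \<noteq> [] \<and> length ks = length s - 1 \<and>
     (\<forall>i<length ks. traj_step d (ks ! i) (s ! i) (s ! Suc i)) \<and> seq_eq (last s) []"

definition ind :: "edge \<Rightarrow> edge \<Rightarrow> int" where
  "ind e = (\<lambda>f. if f = e then 1 else 0)"

text \<open>r(e) as a 1-chain (function on edges, supported on positive edges).\<close>
definition r_edge :: "edge \<Rightarrow> edge \<Rightarrow> int" where
  "r_edge e = (if lex_less (fst e) (snd e) then ind e else (\<lambda>f. - ind (einv e) f))"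

definition r_loop :: "edge list \<Rightarrow> edge \<Rightarrow> int" where
  "r_loop l = (\<lambda>f. sum_list (map (\<lambda>e. r_edge e f) l))"

definition plaq_pos :: "nat \<Rightarrow> edge list \<Rightarrow> bool" where
  "plaq_pos d p \<longleftrightarrow> plaquette d p \<and>
     (\<forall>w\<in>fst ` set p. w \<noteq> fst (p ! 0) \<longrightarrow> lex_less (fst (p ! 0)) w) \<and>
     (\<forall>w\<in>fst ` set p - {fst (p ! 0), snd (p ! 0)}. lex_less (snd (p ! 0)) w)"

text \<open>p = e1 e2 e3^{-1} e4^{-1}, delta(p) = e1 + e2 - e3 - e4.\<close>
definition delta_p :: "edge list \<Rightarrow> edge \<Rightarrow> int" where
  "delta_p p = (\<lambda>f. ind (p ! 0) f + ind (p ! 1) f - ind (einv (p ! 2)) f - ind (einv (p ! 3)) f)"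

text \<open>Lattice surfaces: finitely supported integer functions on P^+.\<close>
definition surface :: "nat \<Rightarrow> (edge list \<Rightarrow> int) \<Rightarrow> bool" where
  "surface d x \<longleftrightarrow> finite {p. x p \<noteq> 0} \<and> (\<forall>p. x p \<noteq> 0 \<longrightarrow> plaq_pos d p)"

definition delta :: "(edge list \<Rightarrow> int) \<Rightarrow> edge \<Rightarrow> int" where
  "delta x = (\<lambda>f. \<Sum>p\<in>{p. x p \<noteq> 0}. x p * delta_p p f)"

definition surf_area :: "(edge list \<Rightarrow> int) \<Rightarrow> nat" where
  "surf_area x = (\<Sum>p\<in>{p. x p \<noteq> 0}. nat \<bar>x p\<bar>)"

definition loop_area :: "nat \<Rightarrow> edge list \<Rightarrow> nat" where
  "loop_area d l = (LEAST n. \<exists>x. surface d x \<and> delta x = r_loop l \<and> surf_area x = n)"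

end

theory Submission
  imports Defs
begin


lemma lex_trans: "lex_less u v \<Longrightarrow> lex_less v w \<Longrightarrow> lex_less u w"
  unfolding lex_less_def by (erule lexord_trans) (auto simp: trans_def)

lemma lex_irrefl: "\<not> lex_less u u"
  unfolding lex_less_def by (rule lexord_irreflexive) auto

lemma lex_linear: "u \<noteq> v \<Longrightarrow> lex_less u v \<or> lex_less v u"
proof -
  have "\<forall>a b. (a,b) \<in> {(a, b). a < (b::int)} \<or> a = b \<or> (b,a) \<in> {(a, b). a < (b::int)}" by auto
  from lexord_linear[OF this, of u v] show "u \<noteq> v \<Longrightarrow> lex_less u v \<or> lex_less v u"
    unfolding lex_less_def by auto
qed

lemma lex_asym: "lex_less u v \<Longrightarrow> \<not> lex_less v u"
  using lex_trans lex_irrefl by blast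

lemma lex_transl:
  assumes "length u = length v" "length u' = length v'" "length u = length u'"
    and "\<forall>j<length u. v!j - u!j = v'!j - u'!j"
    and "lex_less u v"
  shows "lex_less u' v'"
proof -
  from assms(5) obtain i where i: "i < length u" "take i u = take i v" "u!i < v!i"
    using assms(1) unfolding lex_less_def lexord_take_index_conv by auto
  have "\<forall>j<i. u!j = v!j" using i by (metis nth_take)
  have "\<forall>j<i. u'!j = v'!j"
  proof (intro allI impI)
    fix j assume "j < i"
    have a: "u!j = v!j" using \<open>\<forall>j<i. u!j = v!j\<close> \<open>j<i\<close> by blast
    have "j < length u" using \<open>j<i\<close> i(1) by linarith
    from assms(4)[rule_format, OF this] a show "u'!j = v'!j" by simp
  qed
  hence "take i u' = take i v'" using i(1) assms by (intro nth_equalityI) auto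
  moreover have "u'!i < v'!i" using assms(4) i by force
  ultimately show ?thesis using i(1) assms unfolding lex_less_def lexord_take_index_conv by auto
qed

lemma lex_min:
  assumes "finite S" "S \<noteq> {}"
  shows "\<exists>m\<in>S. \<forall>w\<in>S. w \<noteq> m \<longrightarrow> lex_less m w"
  using assms
proof (induction S rule: finite_ne_induct)
  case (singleton x) then show ?case by auto
next
  case (insert x F)
  then obtain m where m: "m \<in> F" "\<forall>w\<in>F. w \<noteq> m \<longrightarrow> lex_less m w" by auto
  show ?case
  proof (cases "lex_less x m")
    case True then show ?thesis using m lex_trans by (intro bexI[of _ x]) auto
  next
    case False
    then have "x = m \<or> lex_less m x" using lex_linear by blast
    then show ?thesis using m by (intro bexI[of _ m]) auto
  qed
qed

definition dv :: "edge \<Rightarrow> nat \<Rightarrow> int" where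
  "dv e j = snd e ! j - fst e ! j"

lemma lattice_edge_dv:
  assumes "lattice_edge d e"
  shows "length (fst e) = d \<and> length (snd e) = d \<and>
    (\<exists>i<d. \<exists>s. (s = 1 \<or> s = -1) \<and> (\<forall>j<d. dv e j = (if j = i then s else 0)))"
proof -
  obtain i where i: "i < d" "snd e = (fst e)[i := fst e ! i + 1] \<or> snd e = (fst e)[i := fst e ! i - 1]"
    and l: "length (fst e) = d"
    using assms unfolding lattice_edge_def by auto
  show ?thesis
  proof (cases "snd e = (fst e)[i := fst e ! i + 1]")
    case True
    have "\<forall>j<d. dv e j = (if j = i then 1 else 0)"
      using True i l by (simp add: dv_def nth_list_update)
    then show ?thesis using i l True by auto
  next
    case False
    then have F: "snd e = (fst e)[i := fst e ! i - 1]" using i by auto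
    have "\<forall>j<d. dv e j = (if j = i then -1 else 0)"
      using F i l by (simp add: dv_def nth_list_update)
    then show ?thesis using i l F by (intro conjI) (simp, simp, blast)
  qed
qed

lemma lattice_edge_ne: "lattice_edge d e \<Longrightarrow> fst e \<noteq> snd e"
proof
  assume a: "lattice_edge d e" "fst e = snd e"
  then obtain i s where "i < d" "s = 1 \<or> s = -1" "\<forall>j<d. dv e j = (if j = i then s else 0)"
    using lattice_edge_dv by blast
  then have "dv e i = s" by simp
  then show False using a(2) \<open>s = 1 \<or> s = -1\<close> by (auto simp: dv_def)
qed

lemma einv_einv[simp]: "einv (einv e) = e" by (simp add: einv_def)
lemma fst_einv[simp]: "fst (einv e) = snd e" by (simp add: einv_def)
lemma snd_einv[simp]: "snd (einv e) = fst e" by (simp add: einv_def)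

lemma lattice_edge_einv: "lattice_edge d e \<Longrightarrow> lattice_edge d (einv e)"
proof -
  assume a: "lattice_edge d e"
  obtain i where i: "i < d" "snd e = (fst e)[i := fst e ! i + 1] \<or> snd e = (fst e)[i := fst e ! i - 1]"
    and l: "length (fst e) = d"
    using a unfolding lattice_edge_def by auto
  show ?thesis
  proof (cases "snd e = (fst e)[i := fst e ! i + 1]")
    case True
    then have "fst e = (snd e)[i := snd e ! i - 1]" using i l
      by (simp add: list_update_overwrite)
    then show ?thesis using i l True unfolding lattice_edge_def by auto
  next
    case False
    then have F: "snd e = (fst e)[i := fst e ! i - 1]" using i by auto
    then have "fst e = (snd e)[i := snd e ! i + 1]" using i l
      by (simp add: list_update_overwrite)
    then show ?thesis using i l F unfolding lattice_edge_def by auto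
  qed
qed



lemma comb4:
  fixes ia ib ic ie :: nat and sa sb sc se :: int
  assumes "sa = 1 \<or> sa = -1" "sb = 1 \<or> sb = -1" "sc = 1 \<or> sc = -1" "se = 1 \<or> se = -1"
    and Z: "\<And>j. (if j = ia then sa else 0) + (if j = ib then sb else 0) + (if j = ic then sc else 0) + (if j = ie then se else 0) = 0"
    and n1: "\<not> (ia = ib \<and> sa + sb = 0)" and n2: "\<not> (ib = ic \<and> sb + sc = 0)"
  shows "ic = ia \<and> sc = - sa \<and> ie = ib \<and> se = - sb"
proof -
  note z1 = Z[of ia] and z2 = Z[of ib] and z3 = Z[of ic] and z4 = Z[of ie]
  show ?thesis using assms(1-4) n1 n2 z1 z2 z3 z4
    by (auto split: if_splits)
qed


definition sq :: "nat \<Rightarrow> edge \<Rightarrow> edge \<Rightarrow> edge \<Rightarrow> edge \<Rightarrow> bool" where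
  "sq d a b c e \<longleftrightarrow> lattice_edge d a \<and> lattice_edge d b \<and> lattice_edge d c \<and> lattice_edge d e \<and>
     snd a = fst b \<and> snd b = fst c \<and> snd c = fst e \<and> snd e = fst a \<and>
     snd b \<noteq> fst a \<and> snd c \<noteq> fst b"

lemma sq_rot: "sq d a b c e \<Longrightarrow> sq d b c e a"
  unfolding sq_def by auto

lemma sq_rev: "sq d a b c e \<Longrightarrow> sq d (einv e) (einv c) (einv b) (einv a)"
  unfolding sq_def by (auto simp: lattice_edge_einv)

lemma plaquette_sq:
  assumes "plaquette d p"
  shows "\<exists>a b c e. p = [a,b,c,e] \<and> sq d a b c e"
proof -
  have "length p = 4" using assms by (simp add: plaquette_def)
  then obtain a b c e where p: "p = [a,b,c,e]"
    by (auto simp: length_Suc_conv numeral_eq_Suc)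
  have cp: "closed_path d p" and nb: "no_backtrack p" using assms by (auto simp: plaquette_def)
  have lat: "lattice_edge d a" "lattice_edge d b" "lattice_edge d c" "lattice_edge d e"
    using cp p by (auto simp: closed_path_def is_path_def)
  have chn: "\<forall>i. Suc i < length p \<longrightarrow> snd (p ! i) = fst (p ! Suc i)"
    using cp unfolding closed_path_def is_path_def by blast
  have ch0: "snd a = fst b" using chn[rule_format, of 0] p by simp
  have ch1: "snd b = fst c" using chn[rule_format, of 1] p by simp
  have ch2: "snd c = fst e" using chn[rule_format, of 2] p by simp
  have ch3: "snd e = fst a" using cp p unfolding closed_path_def by simp
  have n1: "snd b \<noteq> fst a"
  proof
    assume "snd b = fst a"
    then have "b = einv a" using ch0 by (simp add: einv_def prod_eq_iff)
    then have "erase1 ([] @ [a, b] @ [c,e]) ([] @ [c,e])" using erase1.inner[of "[]" a "[c,e]"] by simp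
    then show False using nb p unfolding no_backtrack_def by auto
  qed
  have n2: "snd c \<noteq> fst b"
  proof
    assume "snd c = fst b"
    then have "c = einv b" using ch1 by (simp add: einv_def prod_eq_iff)
    then have "erase1 ([a] @ [b, c] @ [e]) ([a] @ [e])" using erase1.inner[of "[a]" b "[e]"] by simp
    then show False using nb p unfolding no_backtrack_def by auto
  qed
  show ?thesis using p lat ch0 ch1 ch2 ch3 n1 n2 unfolding sq_def by blast
qed

lemma list_neq_nth:
  assumes "length u = d" "length v = d" "u \<noteq> v"
  shows "\<exists>j<d. u!j \<noteq> v!j"
  using assms nth_equalityI by metis

lemma sq_para:
  assumes "sq d a b c e"
  shows "\<forall>j<d. dv c j = - dv a j \<and> dv e j = - dv b j"
proof -
  have lat: "lattice_edge d a" "lattice_edge d b" "lattice_edge d c" "lattice_edge d e"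
    and ch: "snd a = fst b" "snd b = fst c" "snd c = fst e" "snd e = fst a"
    and nb: "snd b \<noteq> fst a" "snd c \<noteq> fst b" using assms unfolding sq_def by auto
  obtain ia sa where a: "ia < d" "sa = 1 \<or> sa = -1" "\<forall>j<d. dv a j = (if j = ia then sa else 0)"
    and la: "length (fst a) = d" "length (snd a) = d"
    using lattice_edge_dv[OF lat(1)] by blast
  obtain ib sb where b: "ib < d" "sb = 1 \<or> sb = -1" "\<forall>j<d. dv b j = (if j = ib then sb else 0)"
    and lb: "length (fst b) = d" "length (snd b) = d"
    using lattice_edge_dv[OF lat(2)] by blast
  obtain ic sc where c: "ic < d" "sc = 1 \<or> sc = -1" "\<forall>j<d. dv c j = (if j = ic then sc else 0)"
    and lc: "length (fst c) = d" "length (snd c) = d"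
    using lattice_edge_dv[OF lat(3)] by blast
  obtain ie se where e: "ie < d" "se = 1 \<or> se = -1" "\<forall>j<d. dv e j = (if j = ie then se else 0)"
    using lattice_edge_dv[OF lat(4)] by blast
  have Zd: "\<And>j. j < d \<Longrightarrow> dv a j + dv b j + dv c j + dv e j = 0"
    using ch by (simp add: dv_def)
  have Z: "\<And>j. (if j = ia then sa else 0) + (if j = ib then sb else 0) + (if j = ic then sc else 0) + (if j = ie then se else 0) = 0"
  proof -
    fix j
    show "(if j = ia then sa else 0) + (if j = ib then sb else 0) + (if j = ic then sc else 0) + (if j = ie then se else 0) = 0"
    proof (cases "j < d")
      case True then show ?thesis using Zd[OF True] a(3) b(3) c(3) e(3) by simp
    next
      case False then show ?thesis using a(1) b(1) c(1) e(1) by auto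
    qed
  qed
  have n1: "\<not> (ia = ib \<and> sa + sb = 0)"
  proof
    assume h: "ia = ib \<and> sa + sb = 0"
    obtain j where j: "j < d" "snd b ! j \<noteq> fst a ! j" using list_neq_nth[OF lb(2) la(1) nb(1)] by blast
    have "snd b ! j - fst a ! j = dv a j + dv b j" using ch by (simp add: dv_def)
    also have "\<dots> = 0" using a(3) b(3) j(1) h by auto
    finally show False using j(2) by simp
  qed
  have n2: "\<not> (ib = ic \<and> sb + sc = 0)"
  proof
    assume h: "ib = ic \<and> sb + sc = 0"
    obtain j where j: "j < d" "snd c ! j \<noteq> fst b ! j" using list_neq_nth[OF lc(2) lb(1) nb(2)] by blast
    have "snd c ! j - fst b ! j = dv b j + dv c j" using ch by (simp add: dv_def)
    also have "\<dots> = 0" using b(3) c(3) j(1) h by auto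
    finally show False using j(2) by simp
  qed
  have "ic = ia \<and> sc = - sa \<and> ie = ib \<and> se = - sb"
    using comb4[OF a(2) b(2) c(2) e(2) Z n1 n2] .
  then show ?thesis using a(3) b(3) c(3) e(3) by auto
qed



lemma sq_plaquette:
  assumes "sq d a b c e"
  shows "plaquette d [a,b,c,e]"
proof -
  have lat: "lattice_edge d a" "lattice_edge d b" "lattice_edge d c" "lattice_edge d e"
    and ch: "snd a = fst b" "snd b = fst c" "snd c = fst e" "snd e = fst a"
    and nb: "snd b \<noteq> fst a" "snd c \<noteq> fst b" using assms unfolding sq_def by auto
  have ip: "is_path d [a,b,c,e]"
    unfolding is_path_def
  proof (intro conjI allI impI)
    show "\<forall>x\<in>set [a,b,c,e]. lattice_edge d x" using lat by auto
  next
    fix i assume "Suc i < length [a,b,c,e]"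
    then have "i = 0 \<or> i = 1 \<or> i = 2" by auto
    then show "snd ([a,b,c,e] ! i) = fst ([a,b,c,e] ! Suc i)" using ch by auto
  qed
  have nb2: "no_backtrack [a,b,c,e]"
    unfolding no_backtrack_def
  proof
    assume "\<exists>w'. erase1 [a,b,c,e] w'"
    then obtain w' where "erase1 [a,b,c,e] w'" by blast
    then show False
    proof (cases rule: erase1.cases)
      case (inner xs x ys)
      then have "(xs = [] \<and> x = a \<and> einv x = b) \<or> (xs = [a] \<and> x = b \<and> einv x = c) \<or> (xs = [a,b] \<and> x = c \<and> einv x = e)"
        by (auto simp: Cons_eq_append_conv append_eq_Cons_conv)
      then show False using ch nb by (auto simp: einv_def)
    next
      case (wrap x)
      then have "x = a \<and> einv x = e"
        by (auto simp: Cons_eq_append_conv append_eq_Cons_conv)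
      then show False using ch nb by (auto simp: einv_def)
    qed
  qed
  show ?thesis unfolding plaquette_def closed_path_def using ip nb2 ch by simp
qed

lemma r_loop4: "r_loop [a,b,c,e] f = r_edge a f + r_edge b f + r_edge c f + r_edge e f"
  by (simp add: r_loop_def)

lemma core:
  assumes S: "sq d a b c e"
    and m: "lex_less (fst a) (fst b)" "lex_less (fst a) (fst c)" "lex_less (fst a) (fst e)"
    and o: "lex_less (snd a) (fst e)"
  shows "plaq_pos d [a,b,c,e] \<and> (\<forall>f. r_loop [a,b,c,e] f = delta_p [a,b,c,e] f)"
proof -
  have lat: "lattice_edge d a" "lattice_edge d b" "lattice_edge d c" "lattice_edge d e"
    and ch: "snd a = fst b" "snd b = fst c" "snd c = fst e" "snd e = fst a"
    using S unfolding sq_def by auto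
  have P: "\<forall>j<d. dv c j = - dv a j \<and> dv e j = - dv b j" using sq_para[OF S] .
  have L: "length (fst a) = d" "length (snd a) = d" "length (fst b) = d" "length (snd b) = d"
     "length (fst c) = d" "length (snd c) = d" "length (fst e) = d" "length (snd e) = d"
    using lattice_edge_dv[OF lat(1)] lattice_edge_dv[OF lat(2)] lattice_edge_dv[OF lat(3)]
      lattice_edge_dv[OF lat(4)] by auto
  have w12: "lex_less (fst b) (fst c)"
  proof (rule lex_transl[of "fst a" "fst e" "fst b" "fst c"])
    show "\<forall>j<length (fst a). fst e ! j - fst a ! j = fst c ! j - fst b ! j"
      using P L ch by (auto simp: dv_def)
  qed (use L m in auto)
  have w32: "lex_less (fst e) (fst c)"
  proof (rule lex_transl[of "fst a" "fst b" "fst e" "fst c"])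
    show "\<forall>j<length (fst a). fst b ! j - fst a ! j = fst c ! j - fst e ! j"
      using P L ch by (auto simp: dv_def)
  qed (use L m in auto)
  have pl: "plaquette d [a,b,c,e]" using sq_plaquette[OF S] .
  have pp: "plaq_pos d [a,b,c,e]"
    unfolding plaq_pos_def using pl m o w12 ch by auto
  have ra: "r_edge a = ind a" using m(1) ch by (simp add: r_edge_def)
  have rb: "r_edge b = ind b" using w12 ch by (simp add: r_edge_def)
  have rc: "r_edge c = (\<lambda>f. - ind (einv c) f)" using w32 ch lex_asym by (auto simp: r_edge_def)
  have re: "r_edge e = (\<lambda>f. - ind (einv e) f)" using m(3) ch lex_asym by (auto simp: r_edge_def)
  show ?thesis using pp by (simp add: r_loop4 delta_p_def ra rb rc re)
qed


lemma r_edge_einv: "fst x \<noteq> snd x \<Longrightarrow> r_edge (einv x) f = - r_edge x f"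
  using lex_linear[of "fst x" "snd x"] lex_asym[of "fst x" "snd x"]
  by (auto simp: r_edge_def)

lemma orient:
  assumes S: "sq d a b c e"
    and m: "lex_less (fst a) (fst b)" "lex_less (fst a) (fst c)" "lex_less (fst a) (fst e)"
  shows "\<exists>q \<sigma>. plaq_pos d q \<and> (\<sigma> = 1 \<or> \<sigma> = -1) \<and> (\<forall>f. r_loop [a,b,c,e] f = \<sigma> * delta_p q f)"
proof (cases "lex_less (snd a) (fst e)")
  case True
  from core[OF S m True] show ?thesis by (intro exI[of _ "[a,b,c,e]"] exI[of _ 1]) auto
next
  case False
  have lat: "lattice_edge d a" "lattice_edge d b" "lattice_edge d c" "lattice_edge d e"
    and ch: "snd a = fst b" "snd b = fst c" "snd c = fst e" "snd e = fst a"
    and nb: "snd b \<noteq> fst a" "snd c \<noteq> fst b" using S unfolding sq_def by auto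
  have o: "lex_less (fst e) (snd a)" using False lex_linear[of "snd a" "fst e"] ch nb by auto
  have S': "sq d (einv e) (einv c) (einv b) (einv a)" using sq_rev[OF S] .
  have C: "plaq_pos d [einv e, einv c, einv b, einv a] \<and>
     (\<forall>f. r_loop [einv e, einv c, einv b, einv a] f = delta_p [einv e, einv c, einv b, einv a] f)"
    by (rule core[OF S']) (use m o ch in auto)
  have ne: "fst a \<noteq> snd a" "fst b \<noteq> snd b" "fst c \<noteq> snd c" "fst e \<noteq> snd e"
    using lat lattice_edge_ne by auto
  have "\<forall>f. r_loop [a,b,c,e] f = (-1) * delta_p [einv e, einv c, einv b, einv a] f"
  proof
    fix f
    have "r_loop [einv e, einv c, einv b, einv a] f = delta_p [einv e, einv c, einv b, einv a] f"
      using C by blast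
    then show "r_loop [a,b,c,e] f = (-1) * delta_p [einv e, einv c, einv b, einv a] f"
      using ne by (simp add: r_loop4 r_edge_einv)
  qed
  then show ?thesis using C by (intro exI[of _ "[einv e, einv c, einv b, einv a]"] exI[of _ "-1"]) auto
qed

lemma plaq_rep:
  assumes "plaquette d p"
  shows "\<exists>q \<sigma>. plaq_pos d q \<and> (\<sigma> = 1 \<or> \<sigma> = -1) \<and> (\<forall>f. r_loop p f = \<sigma> * delta_p q f)"
proof -
  obtain a b c e where p: "p = [a,b,c,e]" and S: "sq d a b c e" using plaquette_sq[OF assms] by blast
  have lat: "lattice_edge d a" "lattice_edge d b" "lattice_edge d c" "lattice_edge d e"
    and ch: "snd a = fst b" "snd b = fst c" "snd c = fst e" "snd e = fst a"
    and nb: "snd b \<noteq> fst a" "snd c \<noteq> fst b" using S unfolding sq_def by auto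
  have ne: "fst a \<noteq> snd a" "fst b \<noteq> snd b" "fst c \<noteq> snd c" "fst e \<noteq> snd e"
    using lat lattice_edge_ne by auto
  have D: "fst a \<noteq> fst b" "fst a \<noteq> fst c" "fst a \<noteq> fst e" "fst b \<noteq> fst c" "fst b \<noteq> fst e" "fst c \<noteq> fst e"
    using ne ch nb by metis+
  obtain m where m: "m \<in> {fst a, fst b, fst c, fst e}" "\<forall>w\<in>{fst a, fst b, fst c, fst e}. w \<noteq> m \<longrightarrow> lex_less m w"
    using lex_min[of "{fst a, fst b, fst c, fst e}"] by auto
  have R: "r_loop [a,b,c,e] f = r_loop [b,c,e,a] f" "r_loop [a,b,c,e] f = r_loop [c,e,a,b] f"
    "r_loop [a,b,c,e] f = r_loop [e,a,b,c] f" for f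
    by (simp_all add: r_loop4)
  from m(1) consider "m = fst a" | "m = fst b" | "m = fst c" | "m = fst e" by auto
  then show ?thesis
  proof cases
    case 1
    then show ?thesis using orient[OF S] m(2) D p by auto
  next
    case 2
    then have "\<exists>q \<sigma>. plaq_pos d q \<and> (\<sigma> = 1 \<or> \<sigma> = -1) \<and> (\<forall>f. r_loop [b,c,e,a] f = \<sigma> * delta_p q f)"
      using orient[OF sq_rot[OF S]] m(2) D by auto
    then show ?thesis using p R by metis
  next
    case 3
    then have "\<exists>q \<sigma>. plaq_pos d q \<and> (\<sigma> = 1 \<or> \<sigma> = -1) \<and> (\<forall>f. r_loop [c,e,a,b] f = \<sigma> * delta_p q f)"
      using orient[OF sq_rot[OF sq_rot[OF S]]] m(2) D by auto
    then show ?thesis using p R by metis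
  next
    case 4
    then have "\<exists>q \<sigma>. plaq_pos d q \<and> (\<sigma> = 1 \<or> \<sigma> = -1) \<and> (\<forall>f. r_loop [e,a,b,c] f = \<sigma> * delta_p q f)"
      using orient[OF sq_rot[OF sq_rot[OF sq_rot[OF S]]]] m(2) D by auto
    then show ?thesis using p R by metis
  qed
qed



lemma r_loop_Nil[simp]: "r_loop [] f = 0" by (simp add: r_loop_def)
lemma r_loop_Cons[simp]: "r_loop (x # xs) f = r_edge x f + r_loop xs f" by (simp add: r_loop_def)
lemma r_loop_append[simp]: "r_loop (xs @ ys) f = r_loop xs f + r_loop ys f" by (simp add: r_loop_def)

definition good :: "edge list \<Rightarrow> bool" where
  "good w \<longleftrightarrow> (\<forall>x\<in>set w. fst x \<noteq> snd x)"

lemma good_append[simp]: "good (xs @ ys) \<longleftrightarrow> good xs \<and> good ys" by (auto simp: good_def)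
lemma good_Cons[simp]: "good (x # ys) \<longleftrightarrow> fst x \<noteq> snd x \<and> good ys" by (auto simp: good_def)
lemma good_Nil[simp]: "good []" by (auto simp: good_def)

lemma pinv_Cons: "pinv (x # c) = pinv c @ [einv x]" by (simp add: pinv_def)
lemma pinv_Nil[simp]: "pinv [] = []" by (simp add: pinv_def)

lemma good_pinv: "good c \<Longrightarrow> good (pinv c)"
  by (induction c) (auto simp: pinv_Cons)

lemma r_loop_pinv: "good c \<Longrightarrow> r_loop (pinv c) f = - r_loop c f"
  by (induction c) (auto simp: pinv_Cons r_edge_einv)

lemma erase1_r: "erase1 w w' \<Longrightarrow> good w \<Longrightarrow> r_loop w' f = r_loop w f \<and> set w' \<subseteq> set w"
  by (induction rule: erase1.induct) (auto simp: r_edge_einv)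

lemma erase_star_r: "erase1\<^sup>*\<^sup>* w l \<Longrightarrow> good w \<Longrightarrow> r_loop l f = r_loop w f \<and> set l \<subseteq> set w"
proof (induction rule: rtranclp_induct)
  case base then show ?case by simp
next
  case (step y z)
  then have "r_loop y f = r_loop w f" "set y \<subseteq> set w" by auto
  moreover have "good y" using \<open>set y \<subseteq> set w\<close> \<open>good w\<close> by (auto simp: good_def)
  ultimately show ?case using erase1_r[OF step(2)] by auto
qed

lemma r_loop_rotate1: "r_loop (rotate1 x) f = r_loop x f"
  by (cases x) auto

lemma r_loop_rotate: "r_loop (rotate n x) f = r_loop x f"
  by (induction n) (auto simp: r_loop_rotate1)

lemma rot_eq_r: "rot_eq x y \<Longrightarrow> r_loop y f = r_loop x f"
  unfolding rot_eq_def by (metis r_loop_rotate)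

lemma reduces_r: "reduces w l \<Longrightarrow> good w \<Longrightarrow> r_loop l f = r_loop w f"
  unfolding reduces_def using erase_star_r rot_eq_r by metis

definition RR :: "edge list list \<Rightarrow> edge \<Rightarrow> int" where
  "RR s f = sum_list (map (\<lambda>l. r_loop l f) s)"

lemma RR_Nil[simp]: "RR [] f = 0" by (simp add: RR_def)
lemma RR_Cons[simp]: "RR (x # s) f = r_loop x f + RR s f" by (simp add: RR_def)
lemma RR_append[simp]: "RR (s @ t) f = RR s f + RR t f" by (simp add: RR_def)

lemma RR_filter: "RR (filter (\<lambda>x. x \<noteq> []) s) f = RR s f"
  by (induction s) auto

lemma RR_all2: "list_all2 rot_eq s t \<Longrightarrow> RR s f = RR t f"
  by (induction rule: list_all2_induct) (auto simp: rot_eq_r)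

lemma seq_eq_RR: "seq_eq s t \<Longrightarrow> RR s f = RR t f"
  unfolding seq_eq_def using RR_all2 RR_filter by metis

lemma loop_good: "is_loop d l \<Longrightarrow> good l"
  unfolding is_loop_def closed_path_def is_path_def good_def using lattice_edge_ne by blast

lemma plaq_good: "plaquette d p \<Longrightarrow> good p"
  unfolding plaquette_def closed_path_def is_path_def good_def using lattice_edge_ne by blast

lemma deform_r:
  assumes "deform d l l'"
  shows "\<exists>p \<sigma>. plaquette d p \<and> (\<sigma> = 1 \<or> \<sigma> = -1) \<and> (\<forall>f. r_loop l' f = r_loop l f + \<sigma> * r_loop p f)"
proof -
  have gl: "good l" using assms loop_good unfolding deform_def by blast
  obtain a e b c g p where l: "l = a @ [e] @ b" and pl: "plaquette d p" and
    C: "(p = c @ [e] @ g \<and>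
          (reduces (a @ [e] @ g @ c @ [e] @ b) l' \<or> reduces (a @ pinv c @ pinv g @ b) l')) \<or>
       (p = c @ [einv e] @ g \<and>
          (reduces (a @ [e] @ pinv c @ pinv g @ [e] @ b) l' \<or> reduces (a @ g @ c @ b) l'))"
    using assms unfolding deform_def by blast
  have gp: "good p" using plaq_good[OF pl] .
  from C show ?thesis
  proof (elim disjE conjE)
    assume p: "p = c @ [e] @ g" and r: "reduces (a @ [e] @ g @ c @ [e] @ b) l'"
    have "\<forall>f. r_loop l' f = r_loop l f + 1 * r_loop p f"
      using reduces_r[OF r] gl gp l p by auto
    then show ?thesis using pl by blast
  next
    assume p: "p = c @ [e] @ g" and r: "reduces (a @ pinv c @ pinv g @ b) l'"
    have "\<forall>f. r_loop l' f = r_loop l f + (-1) * r_loop p f"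
      using reduces_r[OF r] gl gp l p by (auto simp: good_pinv r_loop_pinv)
    then show ?thesis using pl by blast
  next
    assume p: "p = c @ [einv e] @ g" and r: "reduces (a @ [e] @ pinv c @ pinv g @ [e] @ b) l'"
    have "\<forall>f. r_loop l' f = r_loop l f + (-1) * r_loop p f"
      using reduces_r[OF r] gl gp l p by (auto simp: good_pinv r_loop_pinv r_edge_einv)
    then show ?thesis using pl by blast
  next
    assume p: "p = c @ [einv e] @ g" and r: "reduces (a @ g @ c @ b) l'"
    have "\<forall>f. r_loop l' f = r_loop l f + 1 * r_loop p f"
      using reduces_r[OF r] gl gp l p by (auto simp: r_edge_einv)
    then show ?thesis using pl by blast
  qed
qed

lemma split_r:
  assumes "split_loop d l l1 l2"
  shows "r_loop l1 f + r_loop l2 f = r_loop l f"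
proof -
  have gl: "good l" using assms loop_good unfolding split_loop_def by blast
  obtain a e b c where
    C: "(l = a @ [e] @ b @ [e] @ c \<and> reduces (a @ [e] @ c) l1 \<and> reduces (b @ [e]) l2) \<or>
       (l = a @ [e] @ b @ [einv e] @ c \<and> reduces (a @ c) l1 \<and> reduces b l2)"
    using assms unfolding split_loop_def by blast
  then show ?thesis
  proof (elim disjE conjE)
    assume l: "l = a @ [e] @ b @ [e] @ c" and r1: "reduces (a @ [e] @ c) l1" and r2: "reduces (b @ [e]) l2"
    show ?thesis using reduces_r[OF r1] reduces_r[OF r2] gl l by auto
  next
    assume l: "l = a @ [e] @ b @ [einv e] @ c" and r1: "reduces (a @ c) l1" and r2: "reduces b l2"
    show ?thesis using reduces_r[OF r1] reduces_r[OF r2] gl l by (auto simp: r_edge_einv)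
  qed
qed

lemma step_RR:
  assumes "traj_step d k s s'"
  shows "(k \<longrightarrow> (\<exists>q \<sigma>. plaq_pos d q \<and> (\<sigma> = 1 \<or> \<sigma> = -1) \<and> (\<forall>f. RR s' f = RR s f + \<sigma> * delta_p q f)))
     \<and> (\<not> k \<longrightarrow> (\<forall>f. RR s' f = RR s f))"
proof -
  obtain A l B C where e1: "seq_eq s (A @ [l] @ B)" and e2: "seq_eq s' (A @ C @ B)" and
    K: "if k then (\<exists>l'. C = [l'] \<and> deform d l l') else (\<exists>l1 l2. C = [l1, l2] \<and> split_loop d l l1 l2)"
    using assms unfolding traj_step_def by blast
  have R1: "RR s f = RR A f + r_loop l f + RR B f" for f using seq_eq_RR[OF e1] by simp
  have R2: "RR s' f = RR A f + RR C f + RR B f" for f using seq_eq_RR[OF e2] by simp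
  show ?thesis
  proof (cases k)
    case True
    then obtain l' where C: "C = [l']" and df: "deform d l l'" using K by auto
    obtain p \<sigma> where pl: "plaquette d p" and sg: "\<sigma> = 1 \<or> \<sigma> = -1"
      and r: "\<forall>f. r_loop l' f = r_loop l f + \<sigma> * r_loop p f" using deform_r[OF df] by blast
    obtain q \<tau> where q: "plaq_pos d q" and tg: "\<tau> = 1 \<or> \<tau> = -1"
      and rq: "\<forall>f. r_loop p f = \<tau> * delta_p q f" using plaq_rep[OF pl] by blast
    have "\<forall>f. RR s' f = RR s f + (\<sigma> * \<tau>) * delta_p q f"
      using R1 R2 C r rq by (simp add: algebra_simps)
    moreover have "\<sigma> * \<tau> = 1 \<or> \<sigma> * \<tau> = -1" using sg tg by auto
    ultimately show ?thesis using True q by blast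
  next
    case False
    then obtain l1 l2 where C: "C = [l1, l2]" and sp: "split_loop d l l1 l2" using K by auto
    show ?thesis using False R1 R2 C split_r[OF sp] by (simp add: algebra_simps)
  qed
qed



lemma delta_super:
  assumes "finite S" "{p. x p \<noteq> 0} \<subseteq> S"
  shows "delta x f = (\<Sum>p\<in>S. x p * delta_p p f)"
  unfolding delta_def by (rule sum.mono_neutral_left) (use assms in auto)

lemma area_super:
  assumes "finite S" "{p. x p \<noteq> 0} \<subseteq> S"
  shows "surf_area x = (\<Sum>p\<in>S. nat \<bar>x p\<bar>)"
  unfolding surf_area_def by (rule sum.mono_neutral_left) (use assms in auto)

lemma surf_upd:
  fixes c :: int
  assumes sx: "surface d x" and q: "plaq_pos d q"
  defines "x' \<equiv> x(q := x q + c)"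
  shows "surface d x' \<and> (\<forall>f. delta x' f = delta x f + c * delta_p q f) \<and>
     surf_area x' \<le> surf_area x + nat \<bar>c\<bar>"
proof -
  define S where "S = {p. x p \<noteq> 0} \<union> {q}"
  have fS: "finite S" using sx unfolding surface_def S_def by auto
  have s1: "{p. x p \<noteq> 0} \<subseteq> S" "{p. x' p \<noteq> 0} \<subseteq> S" unfolding S_def x'_def by auto
  have qS: "q \<in> S" unfolding S_def by auto
  have sx': "surface d x'"
    unfolding surface_def
  proof
    show "finite {p. x' p \<noteq> 0}" using fS s1(2) finite_subset by blast
    show "\<forall>p. x' p \<noteq> 0 \<longrightarrow> plaq_pos d p" using sx q unfolding surface_def x'_def by auto
  qed
  have eq: "\<And>g. (\<Sum>p\<in>S - {q}. g (x' p) p) = (\<Sum>p\<in>S - {q}. g (x p) p)"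
    by (rule sum.cong) (auto simp: x'_def)
  have D: "delta x' f = delta x f + c * delta_p q f" for f
  proof -
    have "delta x' f = x' q * delta_p q f + (\<Sum>p\<in>S - {q}. x' p * delta_p p f)"
      using delta_super[OF fS s1(2)] sum.remove[OF fS qS] by simp
    also have "\<dots> = (x q + c) * delta_p q f + (\<Sum>p\<in>S - {q}. x p * delta_p p f)"
      using eq[of "\<lambda>a p. a * delta_p p f"] by (simp add: x'_def)
    also have "\<dots> = delta x f + c * delta_p q f"
      using delta_super[OF fS s1(1)] sum.remove[OF fS qS, of "\<lambda>p. x p * delta_p p f"]
      by (simp add: algebra_simps)
    finally show ?thesis .
  qed
  have A: "surf_area x' \<le> surf_area x + nat \<bar>c\<bar>"
  proof -
    have "surf_area x' = nat \<bar>x' q\<bar> + (\<Sum>p\<in>S - {q}. nat \<bar>x' p\<bar>)"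
      using area_super[OF fS s1(2)] sum.remove[OF fS qS] by simp
    also have "\<dots> = nat \<bar>x q + c\<bar> + (\<Sum>p\<in>S - {q}. nat \<bar>x p\<bar>)"
      using eq[of "\<lambda>a p. nat \<bar>a\<bar>"] by (simp add: x'_def)
    also have "\<dots> \<le> nat \<bar>x q\<bar> + nat \<bar>c\<bar> + (\<Sum>p\<in>S - {q}. nat \<bar>x p\<bar>)"
      by simp
    also have "\<dots> = surf_area x + nat \<bar>c\<bar>"
      using area_super[OF fS s1(1)] sum.remove[OF fS qS, of "\<lambda>p. nat \<bar>x p\<bar>"] by simp
    finally show ?thesis .
  qed
  show ?thesis using sx' D A by blast
qed

lemma traj_surface:
  assumes V: "vanishing_traj d s ks"
  shows "i \<le> length ks \<Longrightarrow> \<exists>x. surface d x \<and> (\<forall>f. delta x f = RR (s ! 0) f - RR (s ! i) f) \<and>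
            surf_area x \<le> length (filter (\<lambda>k. k) (take i ks))"
proof (induction i)
  case 0
  have "surface d (\<lambda>_. 0)" by (simp add: surface_def)
  moreover have "delta (\<lambda>_. 0) f = 0" for f by (simp add: delta_def)
  moreover have "surf_area (\<lambda>_. 0) = 0" by (simp add: surf_area_def)
  ultimately show ?case by auto
next
  case (Suc i)
  then obtain x where x: "surface d x" "\<forall>f. delta x f = RR (s ! 0) f - RR (s ! i) f"
    "surf_area x \<le> length (filter (\<lambda>k. k) (take i ks))" by auto
  have il: "i < length ks" using Suc.prems by simp
  have st: "traj_step d (ks ! i) (s ! i) (s ! Suc i)" using V il unfolding vanishing_traj_def by blast
  have tk: "take (Suc i) ks = take i ks @ [ks ! i]" using il by (simp add: take_Suc_conv_app_nth)
  show ?case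
  proof (cases "ks ! i")
    case True
    then obtain q \<sigma> where q: "plaq_pos d q" "\<sigma> = 1 \<or> \<sigma> = -1"
      "\<forall>f. RR (s ! Suc i) f = RR (s ! i) f + \<sigma> * delta_p q f" using step_RR[OF st] by blast
    define x' where "x' = x(q := x q + (- \<sigma>))"
    have U: "surface d x' \<and> (\<forall>f. delta x' f = delta x f + (- \<sigma>) * delta_p q f) \<and>
       surf_area x' \<le> surf_area x + nat \<bar>- \<sigma>\<bar>" using surf_upd[OF x(1) q(1)] unfolding x'_def by blast
    have "nat \<bar>- \<sigma>\<bar> = 1" using q(2) by auto
    then have "surf_area x' \<le> length (filter (\<lambda>k. k) (take (Suc i) ks))"
      using U x(3) True tk by simp
    moreover have "\<forall>f. delta x' f = RR (s ! 0) f - RR (s ! Suc i) f"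
      using U x(2) q(3) by (simp add: algebra_simps)
    ultimately show ?thesis using U by blast
  next
    case False
    then have "\<forall>f. RR (s ! Suc i) f = RR (s ! i) f" using step_RR[OF st] by blast
    then show ?thesis using x False tk by auto
  qed
qed

theorem lemma14p1:
  fixes d :: nat and l :: "edge list" and s :: "edge list list list" and ks :: "bool list"
  assumes "d \<ge> 2"
    and "is_loop d l" and "l \<noteq> []"
    and "vanishing_traj d s ks"
    and "seq_eq (hd s) [l]"
  shows "loop_area d l \<le> length (filter (\<lambda>k. k) ks)"
proof -
  obtain x where x: "surface d x" "\<forall>f. delta x f = RR (s ! 0) f - RR (s ! length ks) f"
    "surf_area x \<le> length (filter (\<lambda>k. k) (take (length ks) ks))"
    using traj_surface[OF assms(4), of "length ks"] by auto
  have ne: "s \<noteq> []" and len: "length ks = length s - 1" and la: "seq_eq (last s) []"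
    using assms(4) unfolding vanishing_traj_def by auto
  have "s ! length ks = last s" using ne len by (simp add: last_conv_nth)
  then have z: "RR (s ! length ks) f = 0" for f using seq_eq_RR[OF la] by simp
  have "s ! 0 = hd s" using ne by (simp add: hd_conv_nth)
  then have h: "RR (s ! 0) f = r_loop l f" for f using seq_eq_RR[OF assms(5)] by simp
  have "delta x = r_loop l" using x(2) z h by auto
  then have "loop_area d l \<le> surf_area x"
    unfolding loop_area_def using x(1) by (intro Least_le) blast
  then show ?thesis using x(3) by simp
qed

end
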